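(* Let $\mathcal{A}$ be an associative algebra with unit $I$, and let $w_n,\tilde w_n$ ($n\ge 1$) be $\mathcal{A}$-valued differentiable functions of $\mathbf{t}_o=(t_1,t_3,t_5,\ldots)$. Put $w(\mathbf{t}_o,z)=I+\sum_{n\ge1}w_n(\mathbf{t}_o)z^{-n}$, $\tilde w(\mathbf{t}_o,z)=I+\sum_{n\ge1}\tilde w_n(\mathbf{t}_o)z^{-n}$, $\tilde\xi(\mathbf{t}_o,z)=\sum_{n\ge1}t_{2n-1}z^{2n-1}$, $\psi(\mathbf{t}_o,z)=w(\mathbf{t}_o,z)e^{\tilde\xi(\mathbf{t}_o,z)}$, $\tilde\psi(\mathbf{t}_o,z)=\tilde w(\mathbf{t}_o,z)e^{-\tilde\xi(\mathbf{t}_o,z)}$, and suppose the bilinear identity $$\mathrm{res}_z\big[\psi(\mathbf{s}_o,z)\,\tilde\psi(\mathbf{t}_o,z)\big]=0$$ holds for all $\mathbf{s}_o,\mathbf{t}_o$. Define $\phi:=-w_1$ and $\tilde\theta$ by $w_2=-\tilde\theta+\frac12(\phi_{t_1}+\phi^2)$, and let $F(\lambda):=I-\frac{\lambda}{2}(\phi_{2[\lambda]}-\phi)$. Then, with $\psi=\psi(\mathbf{t}_o,z)$ and $z,\lambda$ indeterminates, $$\frac1\lambda F(\lambda)(\psi_{2[\lambda]}-\psi)-(\psi_{2[\lambda]}+\psi)_{t_1}=\frac{\lambda}{2}\Big(\tilde\theta_{2[\lambda]}-\tilde\theta+\frac12(\phi_{2[\lambda]}-\phi)_{t_1}-\fr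ac12[\phi,\phi_{2[\lambda]}]\Big)F(\lambda)^{-1}(\psi_{2[\lambda]}+\psi).$$
   Context: For a formal series $f(z)=\sum_n f_nz^{-n}$, $\mathrm{res}_z f$ denotes the coefficient $f_1$. Miwa shift notation: $f_{[\lambda]}(\mathbf{t}_o)=f(\mathbf{t}_o+[\lambda])$ with $[\lambda]=(\lambda,\lambda^3/3,\lambda^5/5,\ldots)$, and $f_{2[\lambda]}(\mathbf{t}_o)=f(\mathbf{t}_o+2[\lambda])$; all identities in $\lambda$ are understood as identities of formal power series. $[\,\cdot,\cdot\,]$ is the commutator, and subscript $t_1$ denotes the partial derivative with respect to $t_1$. *)

theory Defs
  imports "HOL-Computational_Algebra.Formal_Power_Series"
          "HOL-Computational_Algebra.Formal_Laurent_Series"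
begin

(* The A-valued differentiable functions of t_o = (t_1,t_3,t_5,...) form a (noncommutative)
   real associative algebra 'r with unit (the constant function I).  The partial derivatives
   d/dt_(2k+1) are given by a family D k (k = 0,1,2,...; D 0 = d/dt_1): real-linear,
   Leibniz, pairwise commuting operators. *)

definition odd_time_derivations :: "(nat \<Rightarrow> 'r::real_algebra_1 \<Rightarrow> 'r) \<Rightarrow> bool" where
  "odd_time_derivations D \<longleftrightarrow>
     (\<forall>k x y. D k (x + y) = D k x + D k y) \<and>
     (\<forall>k c x. D k (c *\<^sub>R x) = c *\<^sub>R D k x) \<and>
     (\<forall>k x y. D k (x * y) = D k x * y + x * D k y) \<and>
     (\<forall>j k x. D j (D k x) = D k (D j x))"

(* Miwa shift f_{2[lambda]} = f(t_o + 2[lambda]) as a formal power series in lambda (Taylor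
   expansion).  Its coefficients S_n f are determined by S_0 f = f and the chain rule
     d/dlambda f(t+2[lambda]) = sum_k 2 lambda^(2k) (d f/dt_(2k+1))(t+2[lambda]),
   i.e. (n+1) S_(n+1) f = sum_{2k <= n} 2 S_(n-2k) (D k f). *)
fun miwa2_coeff :: "(nat \<Rightarrow> 'r::real_algebra_1 \<Rightarrow> 'r) \<Rightarrow> nat \<Rightarrow> 'r \<Rightarrow> 'r" where
  "miwa2_coeff D 0 f = f"
| "miwa2_coeff D (Suc n) f =
     (1 / real (Suc n)) *\<^sub>R (\<Sum>k\<le>n div 2. 2 *\<^sub>R miwa2_coeff D (n - 2 * k) (D k f))"

definition miwa2 :: "(nat \<Rightarrow> 'r::real_algebra_1 \<Rightarrow> 'r) \<Rightarrow> 'r \<Rightarrow> 'r fps" where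
  "miwa2 D f = Abs_fps (\<lambda>n. miwa2_coeff D n f)"

definition fps_cmap :: "('a \<Rightarrow> 'b) \<Rightarrow> 'a fps \<Rightarrow> 'b fps" where
  "fps_cmap g F = Abs_fps (\<lambda>n. g (fps_nth F n))"

definition fls_cmap :: "('a::zero \<Rightarrow> 'b::zero) \<Rightarrow> 'a fls \<Rightarrow> 'b fls" where
  "fls_cmap g F = Abs_fls (\<lambda>n. g (fls_nth F n))"

definition ring_inverse :: "'a::monoid_mult \<Rightarrow> 'a" where
  "ring_inverse x = (THE y. x * y = 1 \<and> y * x = 1)"

(* Formal series in z:  an element of 'r fls in the variable zeta = z^{-1}, so
   z^{-n} = fls_X^n, z = fls_X_inv and res_z f = coefficient of z^{-1} = fls_nth f 1. *)
definition res_z :: "'a::zero fls \<Rightarrow> 'a" where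
  "res_z f = fls_nth f 1"

definition dressing :: "(nat \<Rightarrow> 'r::ring_1) \<Rightarrow> 'r fls" where
  "dressing w = fps_to_fls (Abs_fps (\<lambda>n. if n = 0 then 1 else w n))"

(* Wave functions psi = W e^{xi~(t_o,z)} are represented by their factor W; the factor
   e^{xi~(t_o,z)} is a scalar (central) and d/dt_(2k+1) e^{xi~} = z^(2k+1) e^{xi~}, so
     d/dt_(2k+1) (W e^{xi~}) = (D k W + z^(2k+1) W) e^{xi~}. *)
definition wave_deriv :: "(nat \<Rightarrow> 'r::real_algebra_1 \<Rightarrow> 'r) \<Rightarrow> nat \<Rightarrow> 'r fls \<Rightarrow> 'r fls" where
  "wave_deriv D k W = fls_cmap (D k) W + fls_X_inv ^ (2 * k + 1) * W"

(* The same, for wave functions depending on lambda ((fls-valued) power series in lambda),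
   for the t_1 derivative. *)
definition wave_t1 :: "(nat \<Rightarrow> 'r::real_algebra_1 \<Rightarrow> 'r) \<Rightarrow> 'r fls fps \<Rightarrow> 'r fls fps" where
  "wave_t1 D P = fps_cmap (wave_deriv D 0) P"

(* e^{xi~(2[lambda],z)} = exp(sum_{n odd} (2/n) (lambda z)^n) as a power series in lambda
   with coefficients in the z-series; note xi~(t_o+2[lambda],z) = xi~(t_o,z) + xi~(2[lambda],z). *)
definition miwa2_exp_coeffs :: "real fps" where
  "miwa2_exp_coeffs = fps_compose (fps_exp 1) (Abs_fps (\<lambda>n. if odd n then 2 / real n else 0))"

definition exp_xi_miwa2 :: "'r::real_algebra_1 fls fps" where
  "exp_xi_miwa2 = Abs_fps (\<lambda>n. fls_const (of_real (fps_nth miwa2_exp_coeffs n)) * fls_X_inv ^ n)"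

(* psi_{2[lambda]} = w(t_o+2[lambda],z) e^{xi~(t_o+2[lambda],z)}, represented (after the
   central factor e^{xi~(t_o,z)}) by  (coefficientwise Miwa shift of w) * e^{xi~(2[lambda],z)}. *)
definition wave_miwa2 :: "(nat \<Rightarrow> 'r::real_algebra_1 \<Rightarrow> 'r) \<Rightarrow> (nat \<Rightarrow> 'r) \<Rightarrow> 'r fls fps" where
  "wave_miwa2 D w =
     Abs_fps (\<lambda>m. fps_to_fls (Abs_fps (\<lambda>n. miwa2_coeff D m (if n = 0 then 1 else w n))))
     * exp_xi_miwa2"

definition lift_fps :: "'r::zero fps \<Rightarrow> 'r fls fps" where
  "lift_fps F = fps_cmap fls_const F"

end

theory Submission
  imports Defs
begin

unbundle fps_syntax
notation fls_nth (infixl \<open>$$\<close> 75)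


lemma reindex_tri:
  fixes f :: "nat \<Rightarrow> nat \<Rightarrow> nat \<Rightarrow> 'a::comm_monoid_add"
  shows "(\<Sum>a\<le>n. \<Sum>k\<le>a div 2. f k (a - 2*k) (n - a))
       = (\<Sum>k\<le>n div 2. \<Sum>b\<le>n - 2*k. f k b (n - 2*k - b))"
proof -
  have "(\<Sum>a\<le>n. \<Sum>k\<le>a div 2. f k (a - 2*k) (n - a))
      = (\<Sum>(a,k)\<in>(SIGMA a:{..n}. {..a div 2}). f k (a - 2*k) (n - a))"
    by (rule sum.Sigma) auto
  also have "\<dots> = (\<Sum>(k,b)\<in>(SIGMA k:{..n div 2}. {..n - 2*k}). f k b (n - 2*k - b))"
    by (rule sum.reindex_bij_witness[where i="\<lambda>(k,b). (b + 2*k, k)" and j="\<lambda>(a,k). (k, a - 2*k)"])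
       auto
  also have "\<dots> = (\<Sum>k\<le>n div 2. \<Sum>b\<le>n - 2*k. f k b (n - 2*k - b))"
    by (rule sum.Sigma[symmetric]) auto
  finally show ?thesis .
qed

fun tay :: "(real \<Rightarrow> 'v \<Rightarrow> 'v) \<Rightarrow> (nat \<Rightarrow> 'v \<Rightarrow> 'v) \<Rightarrow> nat \<Rightarrow> 'v::comm_monoid_add \<Rightarrow> 'v" where
  "tay sc A 0 x = x"
| "tay sc A (Suc n) x = sc (1 / real (Suc n)) (\<Sum>k\<le>n div 2. sc 2 (tay sc A (n - 2*k) (A k x)))"

lemma sum_atMost_rev: "(\<Sum>i\<le>n. f (n - i)) = (\<Sum>i\<le>(n::nat). f i)"
  by (rule sum.reindex_bij_witness[where i="\<lambda>i. n - i" and j="\<lambda>i. n - i"]) auto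

locale scv =
  fixes sc :: "real \<Rightarrow> 'v::ab_group_add \<Rightarrow> 'v"
  assumes sc_add: "sc c (x + y) = sc c x + sc c y"
    and sc_ldistr: "sc (c + d) x = sc c x + sc d x"
    and sc_mult: "sc c (sc d x) = sc (c * d) x"
    and sc_one: "sc 1 x = x"
begin

lemma sc_zero[simp]: "sc c 0 = 0"
  using sc_add[of c 0 0] by simp

lemma sc_zero_left[simp]: "sc 0 x = 0"
  using sc_ldistr[of 0 0 x] by simp

lemma sc_sum: "sc c (sum f S) = (\<Sum>i\<in>S. sc c (f i))"
  by (induction S rule: infinite_finite_induct) (auto simp: sc_add)

lemma sc_comm: "sc c (sc d x) = sc d (sc c x)"
  by (simp add: sc_mult mult.commute)

definition linop :: "(nat \<Rightarrow> 'v \<Rightarrow> 'v) \<Rightarrow> bool" where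
  "linop A \<longleftrightarrow> (\<forall>k x y. A k (x + y) = A k x + A k y) \<and> (\<forall>k c x. A k (sc c x) = sc c (A k x))"

lemma linop_add: "linop A \<Longrightarrow> A k (x + y) = A k x + A k y"
  by (simp add: linop_def)

lemma linop_sc: "linop A \<Longrightarrow> A k (sc c x) = sc c (A k x)"
  by (simp add: linop_def)

lemma linop_zero: "linop A \<Longrightarrow> A k 0 = 0"
  using linop_add[of A k 0 0] by simp

lemma linop_sum: "linop A \<Longrightarrow> A k (sum f S) = (\<Sum>i\<in>S. A k (f i))"
  by (induction S rule: infinite_finite_induct) (auto simp: linop_add linop_zero)

lemma tay_Suc_sc: "sc (real (Suc n)) (tay sc A (Suc n) x) = (\<Sum>k\<le>n div 2. sc 2 (tay sc A (n - 2*k) (A k x)))"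
  by (simp add: sc_mult sc_one)

lemma tay_add: "linop A \<Longrightarrow> tay sc A n (x + y) = tay sc A n x + tay sc A n y"
proof (induction n arbitrary: x y rule: less_induct)
  case (less n)
  show ?case
  proof (cases n)
    case 0 then show ?thesis by simp
  next
    case (Suc m)
    have "tay sc A n (x + y) = sc (1 / real (Suc m)) (\<Sum>k\<le>m div 2. sc 2 (tay sc A (m - 2*k) (A k x)) + sc 2 (tay sc A (m - 2*k) (A k y)))"
      using less by (simp add: Suc linop_add sc_add)
    also have "\<dots> = tay sc A n x + tay sc A n y"
      by (simp add: Suc sum.distrib sc_add)
    finally show ?thesis .
  qed
qed

lemma tay_zero: "linop A \<Longrightarrow> tay sc A n 0 = 0"
  using tay_add[of A n 0 0] by simp

lemma tay_sum: "linop A \<Longrightarrow> tay sc A n (sum f S) = (\<Sum>i\<in>S. tay sc A n (f i))"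
  by (induction S rule: infinite_finite_induct) (auto simp: tay_add tay_zero)

lemma tay_sc: "linop A \<Longrightarrow> tay sc A n (sc c x) = sc c (tay sc A n x)"
proof (induction n arbitrary: x rule: less_induct)
  case (less n)
  show ?case
  proof (cases n)
    case 0 then show ?thesis by simp
  next
    case (Suc m)
    have "tay sc A n (sc c x) = sc (1 / real (Suc m)) (\<Sum>k\<le>m div 2. sc 2 (sc c (tay sc A (m - 2*k) (A k x))))"
      using less by (simp add: Suc linop_sc)
    also have "\<dots> = sc c (tay sc A n x)"
      by (simp add: Suc sc_sum sc_comm[of _ c])
    finally show ?thesis .
  qed
qed

lemma tay_comm:
  assumes "linop A" "\<And>k j x. A k (B j x) = B j (A k x)"
  shows "A k (tay sc B n x) = tay sc B n (A k x)"
proof (induction n arbitrary: x rule: less_induct)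
  case (less n)
  show ?case
  proof (cases n)
    case 0 then show ?thesis by simp
  next
    case (Suc m)
    show ?thesis
      using less assms by (simp add: Suc linop_sc linop_sum)
  qed
qed

end

context scv begin

lemma tay_binomial:
  assumes lA: "linop A" and lB: "linop B" and cAB: "\<And>k j x. A k (B j x) = B j (A k x)"
  shows "tay sc (\<lambda>k x. A k x + B k x) n x = (\<Sum>a\<le>n. tay sc A a (tay sc B (n - a) x))"
proof (induction n arbitrary: x rule: less_induct)
  case (less n)
  show ?case
  proof (cases n)
    case 0 then show ?thesis by simp
  next
    case (Suc m)
    define X1 where "X1 = (\<Sum>k\<le>m div 2. \<Sum>a\<le>m - 2*k. sc 2 (tay sc A a (A k (tay sc B (m - 2*k - a) x))))"
    define X2 where "X2 = (\<Sum>k\<le>m div 2. \<Sum>a\<le>m - 2*k. sc 2 (tay sc A a (tay sc B (m - 2*k - a) (B k x))))"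
    have L: "tay sc (\<lambda>k x. A k x + B k x) n x = sc (1 / real (Suc m)) (X1 + X2)"
    proof -
      have "tay sc (\<lambda>k x. A k x + B k x) n x = sc (1 / real (Suc m))
              (\<Sum>k\<le>m div 2. sc 2 (\<Sum>a\<le>m - 2*k. tay sc A a (tay sc B (m - 2*k - a) (A k x + B k x))))"
        using less Suc by simp
      also have "\<dots> = sc (1 / real (Suc m)) (X1 + X2)"
        unfolding X1_def X2_def sum.distrib[symmetric]
        by (simp add: sc_sum tay_add[OF lB] tay_add[OF lA] sc_add tay_comm[OF lA cAB] sum.distrib)
      finally show ?thesis .
    qed
    define t where "t a = tay sc A a (tay sc B (Suc m - a) x)" for a
    have R1: "(\<Sum>a\<le>Suc m. sc (real a) (t a)) = X1"
    proof -
      have "(\<Sum>a\<le>Suc m. sc (real a) (t a)) = (\<Sum>a\<le>m. sc (real (Suc a)) (t (Suc a)))"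
        by (subst sum.atMost_Suc_shift) simp
      also have "\<dots> = (\<Sum>a\<le>m. \<Sum>k\<le>a div 2. sc 2 (tay sc A (a - 2*k) (A k (tay sc B (m - a) x))))"
        unfolding t_def by (simp only: tay_Suc_sc) simp
      also have "\<dots> = X1" unfolding X1_def
        by (rule reindex_tri[where f="\<lambda>k b c. sc 2 (tay sc A b (A k (tay sc B c x)))"])
      finally show ?thesis .
    qed
    have R2: "(\<Sum>a\<le>Suc m. sc (real (Suc m - a)) (t a)) = X2"
    proof -
      have "(\<Sum>a\<le>Suc m. sc (real (Suc m - a)) (t a))
          = (\<Sum>a\<le>Suc m. tay sc A a (sc (real (Suc m - a)) (tay sc B (Suc m - a) x)))"
        unfolding t_def by (simp add: tay_sc[OF lA])
      also have "\<dots> = (\<Sum>b\<le>Suc m. tay sc A (Suc m - b) (sc (real b) (tay sc B b x)))"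
        using sum_atMost_rev[of "\<lambda>b. tay sc A (Suc m - b) (sc (real b) (tay sc B b x))" "Suc m"]
        by simp
      also have "\<dots> = (\<Sum>b\<le>m. tay sc A (m - b) (sc (real (Suc b)) (tay sc B (Suc b) x)))"
        by (subst sum.atMost_Suc_shift) (simp add: tay_zero[OF lA] del: tay.simps)
      also have "\<dots> = (\<Sum>b\<le>m. \<Sum>k\<le>b div 2. sc 2 (tay sc A (m - b) (tay sc B (b - 2*k) (B k x))))"
        by (simp only: tay_Suc_sc tay_sum[OF lA] tay_sc[OF lA])
      also have "\<dots> = (\<Sum>k\<le>m div 2. \<Sum>b\<le>m - 2*k. sc 2 (tay sc A (m - 2*k - b) (tay sc B b (B k x))))"
        by (rule reindex_tri[where f="\<lambda>k b c. sc 2 (tay sc A c (tay sc B b (B k x)))"])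
      also have "\<dots> = X2" unfolding X2_def
      proof (rule sum.cong[OF refl])
        fix k assume "k \<in> {..m div 2}"
        have e: "\<And>a. a \<le> m - 2*k \<Longrightarrow> m - (2*k + (m - (2*k + a))) = a" by arith
        show "(\<Sum>b\<le>m - 2*k. sc 2 (tay sc A (m - 2*k - b) (tay sc B b (B k x))))
            = (\<Sum>a\<le>m - 2*k. sc 2 (tay sc A a (tay sc B (m - 2*k - a) (B k x))))"
          by (rule sum.reindex_bij_witness[where i="\<lambda>a. m - 2*k - a" and j="\<lambda>b. m - 2*k - b"]) (auto, simp add: e)
      qed
      finally show ?thesis .
    qed
    have "sc (real (Suc m)) (\<Sum>a\<le>Suc m. t a) = X1 + X2"
    proof -
      have "sc (real (Suc m)) (\<Sum>a\<le>Suc m. t a) = (\<Sum>a\<le>Suc m. sc (real a) (t a) + sc (real (Suc m - a)) (t a))"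
        unfolding sc_sum
      proof (rule sum.cong[OF refl])
        fix a assume "a \<in> {..Suc m}"
        then have "real (Suc m) = real a + real (Suc m - a)" by auto
        then show "sc (real (Suc m)) (t a) = sc (real a) (t a) + sc (real (Suc m - a)) (t a)"
          by (subst \<open>real (Suc m) = _\<close>) (rule sc_ldistr)
      qed
      also have "\<dots> = X1 + X2" using R1 R2 by (simp add: sum.distrib)
      finally show ?thesis .
    qed
    then have "sc (1 / real (Suc m)) (X1 + X2) = sc (1 / real (Suc m)) (sc (real (Suc m)) (\<Sum>a\<le>Suc m. t a))"
      by simp
    also have "\<dots> = (\<Sum>a\<le>Suc m. t a)"
      by (simp only: sc_mult) (simp add: sc_one)
    finally have "sc (1 / real (Suc m)) (X1 + X2) = (\<Sum>a\<le>Suc m. t a)" .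
    then show ?thesis using L Suc t_def by simp
  qed
qed

end

interpretation rv: scv "scaleR :: real \<Rightarrow> 'a::real_vector \<Rightarrow> 'a"
  by unfold_locales (auto simp: scaleR_add_right scaleR_add_left)

lemma miwa2_coeff_tay: "miwa2_coeff D n f = tay scaleR D n f"
  by (induction D n f rule: miwa2_coeff.induct) simp_all

lemma derivs_linop: "odd_time_derivations D \<Longrightarrow> rv.linop D"
  by (simp add: rv.linop_def odd_time_derivations_def)

lemma tay_mult:
  fixes D :: "nat \<Rightarrow> 'r::real_algebra_1 \<Rightarrow> 'r"
  assumes dv: "odd_time_derivations D"
  shows "tay scaleR D n (x * y) = (\<Sum>a\<le>n. tay scaleR D a x * tay scaleR D (n - a) y)"
proof (induction n arbitrary: x y rule: less_induct)
  case (less n)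
  have lD: "rv.linop D" using dv by (rule derivs_linop)
  have leib: "D k (x * y) = D k x * y + x * D k y" for k x y
    using dv by (simp add: odd_time_derivations_def)
  show ?case
  proof (cases n)
    case 0 then show ?thesis by simp
  next
    case (Suc m)
    define X1 where "X1 = (\<Sum>k\<le>m div 2. \<Sum>a\<le>m - 2*k. 2 *\<^sub>R (tay scaleR D a (D k x) * tay scaleR D (m - 2*k - a) y))"
    define X2 where "X2 = (\<Sum>k\<le>m div 2. \<Sum>a\<le>m - 2*k. 2 *\<^sub>R (tay scaleR D a x * tay scaleR D (m - 2*k - a) (D k y)))"
    have L: "tay scaleR D n (x * y) = (1 / real (Suc m)) *\<^sub>R (X1 + X2)"
    proof -
      have "tay scaleR D n (x * y) = (1 / real (Suc m)) *\<^sub>R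
              (\<Sum>k\<le>m div 2. 2 *\<^sub>R (\<Sum>a\<le>m - 2*k. tay scaleR D a (D k x) * tay scaleR D (m - 2*k - a) y
                 + tay scaleR D a x * tay scaleR D (m - 2*k - a) (D k y)))"
        using less Suc by (simp add: leib rv.tay_add[OF lD] sum.distrib)
      also have "\<dots> = (1 / real (Suc m)) *\<^sub>R (X1 + X2)"
        unfolding X1_def X2_def sum.distrib[symmetric]
        by (simp add: scaleR_sum_right sum.distrib scaleR_add_right)
      finally show ?thesis .
    qed
    define t where "t a = tay scaleR D a x * tay scaleR D (Suc m - a) y" for a
    have R1: "(\<Sum>a\<le>Suc m. real a *\<^sub>R t a) = X1"
    proof -
      have "(\<Sum>a\<le>Suc m. real a *\<^sub>R t a) = (\<Sum>a\<le>m. real (Suc a) *\<^sub>R t (Suc a))"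
        by (subst sum.atMost_Suc_shift) simp
      also have "\<dots> = (\<Sum>a\<le>m. (real (Suc a) *\<^sub>R tay scaleR D (Suc a) x) * tay scaleR D (m - a) y)"
        unfolding t_def by simp
      also have "\<dots> = (\<Sum>a\<le>m. \<Sum>k\<le>a div 2. 2 *\<^sub>R (tay scaleR D (a - 2*k) (D k x) * tay scaleR D (m - a) y))"
        by (simp only: rv.tay_Suc_sc sum_distrib_right scaleR_left_commute) simp
      also have "\<dots> = X1" unfolding X1_def
        by (rule reindex_tri[where f="\<lambda>k b c. 2 *\<^sub>R (tay scaleR D b (D k x) * tay scaleR D c y)"])
      finally show ?thesis .
    qed
    have R2: "(\<Sum>a\<le>Suc m. real (Suc m - a) *\<^sub>R t a) = X2"
    proof -
      have "(\<Sum>a\<le>Suc m. real (Suc m - a) *\<^sub>R t a)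
          = (\<Sum>a\<le>Suc m. tay scaleR D a x * (real (Suc m - a) *\<^sub>R tay scaleR D (Suc m - a) y))"
        unfolding t_def by simp
      also have "\<dots> = (\<Sum>b\<le>Suc m. tay scaleR D (Suc m - b) x * (real b *\<^sub>R tay scaleR D b y))"
        using sum_atMost_rev[of "\<lambda>b. tay scaleR D (Suc m - b) x * (real b *\<^sub>R tay scaleR D b y)" "Suc m"]
        by simp
      also have "\<dots> = (\<Sum>b\<le>m. tay scaleR D (m - b) x * (real (Suc b) *\<^sub>R tay scaleR D (Suc b) y))"
        by (subst sum.atMost_Suc_shift) (simp del: tay.simps)
      also have "\<dots> = (\<Sum>b\<le>m. \<Sum>k\<le>b div 2. 2 *\<^sub>R (tay scaleR D (m - b) x * tay scaleR D (b - 2*k) (D k y)))"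
        by (simp only: rv.tay_Suc_sc sum_distrib_left mult_scaleR_right)
      also have "\<dots> = (\<Sum>k\<le>m div 2. \<Sum>b\<le>m - 2*k. 2 *\<^sub>R (tay scaleR D (m - 2*k - b) x * tay scaleR D b (D k y)))"
        by (rule reindex_tri[where f="\<lambda>k b c. 2 *\<^sub>R (tay scaleR D c x * tay scaleR D b (D k y))"])
      also have "\<dots> = X2" unfolding X2_def
      proof (rule sum.cong[OF refl])
        fix k assume "k \<in> {..m div 2}"
        have e: "\<And>a. a \<le> m - 2*k \<Longrightarrow> m - (2*k + (m - (2*k + a))) = a" by arith
        show "(\<Sum>b\<le>m - 2*k. 2 *\<^sub>R (tay scaleR D (m - 2*k - b) x * tay scaleR D b (D k y)))
            = (\<Sum>a\<le>m - 2*k. 2 *\<^sub>R (tay scaleR D a x * tay scaleR D (m - 2*k - a) (D k y)))"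
          by (rule sum.reindex_bij_witness[where i="\<lambda>a. m - 2*k - a" and j="\<lambda>b. m - 2*k - b"]) (auto, simp add: e)
      qed
      finally show ?thesis .
    qed
    have "real (Suc m) *\<^sub>R (\<Sum>a\<le>Suc m. t a) = X1 + X2"
    proof -
      have "real (Suc m) *\<^sub>R (\<Sum>a\<le>Suc m. t a) = (\<Sum>a\<le>Suc m. real a *\<^sub>R t a + real (Suc m - a) *\<^sub>R t a)"
        unfolding scaleR_sum_right
      proof (rule sum.cong[OF refl])
        fix a assume "a \<in> {..Suc m}"
        then have "real (Suc m) = real a + real (Suc m - a)" by auto
        then show "real (Suc m) *\<^sub>R t a = real a *\<^sub>R t a + real (Suc m - a) *\<^sub>R t a"
          by (subst \<open>real (Suc m) = _\<close>) (rule scaleR_add_left)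
      qed
      also have "\<dots> = X1 + X2" using R1 R2 by (simp add: sum.distrib)
      finally show ?thesis .
    qed
    then have "(1 / real (Suc m)) *\<^sub>R (X1 + X2) = (\<Sum>a\<le>Suc m. t a)"
    proof -
      have "(1 / real (Suc m)) *\<^sub>R (X1 + X2) = (1 / real (Suc m)) *\<^sub>R (real (Suc m) *\<^sub>R (\<Sum>a\<le>Suc m. t a))"
        using \<open>real (Suc m) *\<^sub>R _ = _\<close> by simp
      also have "\<dots> = (\<Sum>a\<le>Suc m. t a)" by (simp only: scaleR_scaleR) simp
      finally show ?thesis .
    qed
    then show ?thesis using L Suc t_def by simp
  qed
qed

lemma of_real_comm: "(of_real c :: 'a::real_algebra_1) * x = x * of_real c"
  by (simp add: of_real_def)

lemma fls_cmap_nth: "g 0 = 0 \<Longrightarrow> fls_cmap g F $$ n = g (F $$ n)"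
  unfolding fls_cmap_def
proof (rule nth_Abs_fls)
  assume g0: "g 0 = 0"
  have "\<forall>\<^sub>\<infinity>n. F $$ - int n = 0" by simp
  then show "\<forall>\<^sub>\<infinity>n. g (F $$ - int n) = 0"
    by (rule MOST_mono) (simp add: g0)
qed

lemma fps_cmap_nth[simp]: "fps_cmap g F $ n = g (F $ n)"
  by (simp add: fps_cmap_def)

definition flsc :: "real \<Rightarrow> 'r::real_algebra_1 fls \<Rightarrow> 'r fls" where
  "flsc c x = fls_const (of_real c) * x"

lemma flsc_nth[simp]: "flsc c x $$ n = c *\<^sub>R (x $$ n)"
  by (simp add: flsc_def scaleR_conv_of_real)

interpretation fv: scv "flsc :: real \<Rightarrow> 'a::real_algebra_1 fls \<Rightarrow> 'a fls"
  by unfold_locales (auto intro!: fls_eqI simp: scaleR_add_right scaleR_add_left)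

lemma fls_const_central:
  fixes c :: "'a::ring_1"
  assumes "\<And>y. c * y = y * c"
  shows "fls_const c * x = x * fls_const c"
  by (rule fls_eqI) (simp add: assms)

lemma fls_X_inv_pow_central: "fls_X_inv ^ n * x = x * (fls_X_inv ^ n :: 'a::ring_1 fls)"
  by (simp add: fls_X_inv_power_times_conv_shift)

lemma fls_X_inv_pow_nth[simp]: "(fls_X_inv ^ n * x) $$ k = x $$ (k + int n)"
  for x :: "'a::ring_1 fls"
  by (simp add: fls_X_inv_power_times_conv_shift)

lemma fls_X_inv_nth[simp]: "(fls_X_inv * x) $$ k = x $$ (k + 1)"
  for x :: "'a::ring_1 fls"
  by (simp add: fls_X_inv_times_conv_shift)

definition Aop :: "(nat \<Rightarrow> 'r::real_algebra_1 \<Rightarrow> 'r) \<Rightarrow> nat \<Rightarrow> 'r fls \<Rightarrow> 'r fls" where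
  "Aop D k x = fls_cmap (D k) x"

definition Bop :: "nat \<Rightarrow> 'r::real_algebra_1 fls \<Rightarrow> 'r fls" where
  "Bop k x = fls_X_inv ^ (2*k+1) * x"

lemma derivs_zero: "odd_time_derivations D \<Longrightarrow> D k 0 = 0"
  using rv.linop_zero[OF derivs_linop] by blast

lemma derivs_one: "odd_time_derivations D \<Longrightarrow> D k 1 = 0"
proof -
  assume "odd_time_derivations D"
  then have "D k (1 * 1) = D k 1 * 1 + 1 * D k 1" by (simp only: odd_time_derivations_def)
  then show ?thesis by simp
qed

lemma Aop_nth: "odd_time_derivations D \<Longrightarrow> Aop D k x $$ n = D k (x $$ n)"
  by (simp add: Aop_def fls_cmap_nth derivs_zero)

lemma Aop_linop: "odd_time_derivations D \<Longrightarrow> fv.linop (Aop D)"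
  unfolding fv.linop_def
  by (auto intro!: fls_eqI simp: Aop_nth odd_time_derivations_def)

lemma Bop_nth: "Bop k x $$ n = x $$ (n + int (2*k+1))"
  unfolding Bop_def by (rule fls_X_inv_pow_nth)

lemma Bop_linop: "fv.linop Bop"
  unfolding fv.linop_def
  by (auto intro!: fls_eqI simp: Bop_nth simp del: of_nat_Suc)

lemma AB_comm: "odd_time_derivations D \<Longrightarrow> Aop D k (Bop j x) = Bop j (Aop D k x)"
  by (rule fls_eqI) (simp add: Aop_nth Bop_nth del: of_nat_Suc)

lemma wave_deriv_AB: "wave_deriv D = (\<lambda>k x. Aop D k x + Bop k x)"
  by (simp add: fun_eq_iff wave_deriv_def Aop_def Bop_def)

lemma tay_Aop_nth:
  assumes dv: "odd_time_derivations D"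
  shows "tay flsc (Aop D) n x $$ i = tay scaleR D n (x $$ i)"
proof (induction n arbitrary: x rule: less_induct)
  case (less n)
  then show ?case
    by (cases n) (simp_all add: fls_nth_sum Aop_nth dv scaleR_sum_right)
qed

definition cc :: "nat \<Rightarrow> real" where "cc n = (if n = 0 then 1 else 2)"

lemma cc_sum: "(\<Sum>k\<le>m div 2. cc (m - 2*k)) = real (Suc m)"
proof (induction m rule: less_induct)
  case (less m)
  show ?case
  proof (cases m)
    case 0 then show ?thesis by (simp add: cc_def)
  next
    case (Suc m1)
    show ?thesis
    proof (cases m1)
      case 0 then show ?thesis using Suc by (simp add: cc_def)
    next
      case (Suc m2)
      have "m div 2 = Suc (m2 div 2)" using \<open>m = Suc m1\<close> Suc by simp
      then have "(\<Sum>k\<le>m div 2. cc (m - 2*k)) = cc m + (\<Sum>k\<le>m2 div 2. cc (m - 2 * Suc k))"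
        by (simp add: sum.atMost_Suc_shift del: sum.atMost_Suc)
      also have "(\<Sum>k\<le>m2 div 2. cc (m - 2 * Suc k)) = (\<Sum>k\<le>m2 div 2. cc (m2 - 2 * k))"
        using \<open>m = Suc m1\<close> Suc by simp
      also have "\<dots> = real (Suc m2)" using less \<open>m = Suc m1\<close> Suc by simp
      finally show ?thesis using \<open>m = Suc m1\<close> Suc by (simp add: cc_def)
    qed
  qed
qed

lemma tay_Bop: "tay flsc Bop n x = flsc (cc n) (fls_X_inv ^ n * x)"
proof (induction n arbitrary: x rule: less_induct)
  case (less n)
  show ?case
  proof (cases n)
    case 0 then show ?thesis by (simp add: cc_def flsc_def)
  next
    case (Suc m)
    have pw: "\<And>k. k \<le> m div 2 \<Longrightarrow> fls_X_inv ^ (m - 2*k) * Bop k x = (fls_X_inv ^ Suc m * x :: 'a fls)"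
    proof (rule fls_eqI)
      fix k i assume "k \<le> m div 2"
      then have "i + int (m - 2*k) + int (2*k+1) = i + int (Suc m)" by linarith
      then show "(fls_X_inv ^ (m - 2*k) * Bop k x) $$ i = (fls_X_inv ^ Suc m * x :: 'a fls) $$ i"
        by (simp only: fls_X_inv_pow_nth Bop_nth)
    qed
    have "tay flsc Bop n x = flsc (1 / real (Suc m)) (\<Sum>k\<le>m div 2. flsc 2 (tay flsc Bop (m - 2*k) (Bop k x)))"
      by (simp only: Suc tay.simps)
    also have "\<dots> = flsc (1 / real (Suc m)) (\<Sum>k\<le>m div 2. flsc (2 * cc (m - 2*k)) (fls_X_inv ^ Suc m * x))"
      by (rule arg_cong[where f="flsc _"], rule sum.cong[OF refl])
         (simp add: less.IH Suc pw fv.sc_mult del: tay.simps power_Suc)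
    also have "\<dots> = flsc (1 / real (Suc m)) (flsc (2 * (\<Sum>k\<le>m div 2. cc (m - 2*k))) (fls_X_inv ^ Suc m * x))"
      by (rule arg_cong[where f="flsc _"]) (auto intro!: fls_eqI simp: fls_nth_sum scaleR_sum_left[symmetric] sum_distrib_left)
    also have "\<dots> = flsc (cc n) (fls_X_inv ^ n * x)"
    proof -
      have "(2 + 2 * real m) / (1 + real m) = 2" by (simp add: field_simps)
      then show ?thesis by (simp only: cc_sum fv.sc_mult) (simp add: Suc cc_def)
    qed
    finally show ?thesis .
  qed
qed

definition Pz :: "(nat \<Rightarrow> 'r::real_algebra_1 \<Rightarrow> 'r) \<Rightarrow> (nat \<Rightarrow> 'r) \<Rightarrow> 'r fls \<Rightarrow> bool" where
  "Pz D wt x \<longleftrightarrow> (\<forall>js. res_z (fold (wave_deriv D) js x * dressing wt) = 0)"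

context
  fixes D :: "nat \<Rightarrow> 'r::real_algebra_1 \<Rightarrow> 'r" and wt :: "nat \<Rightarrow> 'r"
  assumes dv: "odd_time_derivations D"
begin

lemma wave_linop: "fv.linop (wave_deriv D)"
  using Aop_linop[OF dv] Bop_linop unfolding wave_deriv_AB fv.linop_def
  by (simp add: fv.sc_add)

lemma wave_add: "wave_deriv D k (x + y) = wave_deriv D k x + wave_deriv D k y"
  using wave_linop by (simp add: fv.linop_add)

lemma wave_zero: "wave_deriv D k 0 = 0"
  using wave_linop by (simp add: fv.linop_zero)

lemma fold_add: "fold (wave_deriv D) js (x + y) = fold (wave_deriv D) js x + fold (wave_deriv D) js y"
  by (induction js arbitrary: x y) (simp_all add: wave_add)

lemma fold_zero: "fold (wave_deriv D) js 0 = 0"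
  by (induction js) (simp_all add: wave_zero)

lemma res_z_add: "res_z ((a + b) * c :: 'r fls) = res_z (a * c) + res_z (b * c)"
  by (simp add: res_z_def distrib_right)

lemma Pz_add: "Pz D wt x \<Longrightarrow> Pz D wt y \<Longrightarrow> Pz D wt (x + y)"
  by (simp add: Pz_def fold_add res_z_add)

lemma Pz_zero: "Pz D wt 0"
  by (simp add: Pz_def fold_zero res_z_def)

lemma Pz_wave: "Pz D wt x \<Longrightarrow> Pz D wt (wave_deriv D k x)"
  unfolding Pz_def
proof
  fix js assume "\<forall>js. res_z (fold (wave_deriv D) js x * dressing wt) = 0"
  then show "res_z (fold (wave_deriv D) js (wave_deriv D k x) * dressing wt) = 0"
  proof -
    have e: "fold (wave_deriv D) js (wave_deriv D k x) = fold (wave_deriv D) (k # js) x" by simp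
    have "res_z (fold (wave_deriv D) (k # js) x * dressing wt) = 0" using \<open>\<forall>js. _\<close> by blast
    then show ?thesis by (simp only: e)
  qed
qed

lemma wave_const: "wave_deriv D k (fls_const r * x) = fls_const (D k r) * x + fls_const r * wave_deriv D k x"
  unfolding wave_deriv_AB
proof (rule fls_eqI)
  fix n
  have "D k (r * x $$ n) = D k r * x $$ n + r * D k (x $$ n)"
    using dv by (simp add: odd_time_derivations_def)
  then show "(Aop D k (fls_const r * x) + Bop k (fls_const r * x)) $$ n =
       (fls_const (D k r) * x + fls_const r * (Aop D k x + Bop k x)) $$ n"
    by (simp add: Aop_nth[OF dv] Bop_nth distrib_left del: of_nat_Suc)
qed

lemma Pz_const: "Pz D wt x \<Longrightarrow> Pz D wt (fls_const r * x)"
proof -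
  have "\<forall>r x. Pz D wt x \<longrightarrow> res_z (fold (wave_deriv D) js (fls_const r * x) * dressing wt) = 0" for js
  proof (induction js)
    case Nil
    show ?case
    proof (intro allI impI)
      fix r x assume "Pz D wt x"
      then have "res_z (fold (wave_deriv D) [] x * dressing wt) = 0" unfolding Pz_def by blast
      then show "res_z (fold (wave_deriv D) [] (fls_const r * x) * dressing wt) = 0"
        by (simp add: res_z_def mult.assoc)
    qed
  next
    case (Cons k js)
    show ?case
    proof (intro allI impI)
      fix r x assume px: "Pz D wt x"
      have "fold (wave_deriv D) (k # js) (fls_const r * x)
          = fold (wave_deriv D) js (fls_const (D k r) * x) + fold (wave_deriv D) js (fls_const r * wave_deriv D k x)"
        by (simp add: wave_const fold_add)
      moreover have "res_z (fold (wave_deriv D) js (fls_const (D k r) * x) * dressing wt) = 0"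
        using Cons px by blast
      moreover have "res_z (fold (wave_deriv D) js (fls_const r * wave_deriv D k x) * dressing wt) = 0"
        using Cons Pz_wave[OF px] by blast
      ultimately show "res_z (fold (wave_deriv D) (k # js) (fls_const r * x) * dressing wt) = 0"
        by (simp only: res_z_add) simp
    qed
  qed
  then show "Pz D wt x \<Longrightarrow> Pz D wt (fls_const r * x)" by (simp add: Pz_def)
qed

lemma Pz_flsc: "Pz D wt x \<Longrightarrow> Pz D wt (flsc c x)"
  by (simp add: flsc_def Pz_const)

lemma Pz_neg: "Pz D wt x \<Longrightarrow> Pz D wt (- x)"
proof -
  assume "Pz D wt x"
  moreover have "fls_const (-1) * x = - x" by (rule fls_eqI) simp
  ultimately show ?thesis using Pz_const[of x "-1"] by simp
qed

lemma Pz_diff: "Pz D wt x \<Longrightarrow> Pz D wt y \<Longrightarrow> Pz D wt (x - y)"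
proof -
  assume "Pz D wt x" "Pz D wt y"
  then have "Pz D wt (x + (- y))" by (intro Pz_add Pz_neg)
  then show ?thesis by simp
qed

lemma Pz_sum: "(\<And>i. i \<in> S \<Longrightarrow> Pz D wt (f i)) \<Longrightarrow> Pz D wt (sum f S)"
  by (induction S rule: infinite_finite_induct) (auto simp: Pz_zero Pz_add)

lemma Pz_tay: "Pz D wt x \<Longrightarrow> Pz D wt (tay flsc (wave_deriv D) n x)"
proof (induction n arbitrary: x rule: less_induct)
  case (less n)
  show ?case
  proof (cases n)
    case 0 then show ?thesis using less.prems by simp
  next
    case (Suc m)
    show ?thesis unfolding Suc tay.simps
      by (intro Pz_flsc Pz_sum less.IH Pz_wave less.prems) (simp add: Suc)
  qed
qed

lemma res_lowest:
  fixes f g :: "'a::ring_1 fls"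
  assumes "\<And>k. k < a \<Longrightarrow> f $$ k = 0" "\<And>k. k < b \<Longrightarrow> g $$ k = 0"
  shows "(f * g) $$ (a + b) = f $$ a * g $$ b"
proof (cases "f = 0 \<or> g = 0")
  case True then show ?thesis by auto
next
  case False
  then have f0: "f \<noteq> 0" and g0: "g \<noteq> 0" by auto
  have df: "a \<le> fls_subdegree f"
    using assms(1)[of "fls_subdegree f"] f0 nth_fls_subdegree_nonzero[OF f0] by (meson not_le)
  have dg: "b \<le> fls_subdegree g"
    using assms(2)[of "fls_subdegree g"] g0 nth_fls_subdegree_nonzero[OF g0] by (meson not_le)
  show ?thesis
  proof (cases "a = fls_subdegree f \<and> b = fls_subdegree g")
    case True
    then show ?thesis by (simp add: fls_times_nth(2))
  next
    case False
    then have "a + b < fls_subdegree f + fls_subdegree g" using df dg by auto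
    moreover have "f $$ a * g $$ b = 0"
      using False df dg by (auto simp: nth_less_subdegree_zero)
    ultimately show ?thesis by (simp add: fls_times_nth_eq0)
  qed
qed

lemma uniqueness:
  assumes "Pz D wt x" "\<And>k. k \<le> 0 \<Longrightarrow> x $$ k = 0"
  shows "x = 0"
proof -
  have "\<forall>x. Pz D wt x \<longrightarrow> (\<forall>k\<le>0. x $$ k = 0) \<longrightarrow> (\<forall>j\<le>n. x $$ (int j + 1) = 0)" for n
  proof (induction n)
    case 0
    show ?case
    proof (intro allI impI)
      fix x j assume px: "Pz D wt x" and nx: "\<forall>k\<le>0. x $$ k = 0" and "j \<le> (0::nat)"
      have "res_z (x * dressing wt) = 0" using px by (auto simp: Pz_def dest: spec[of _ "[]"])
      moreover have "(x * dressing wt) $$ (1 + 0) = x $$ 1 * dressing wt $$ 0"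
        by (rule res_lowest) (auto simp: nx dressing_def)
      ultimately show "x $$ (int j + 1) = 0" using \<open>j \<le> 0\<close> by (simp add: res_z_def dressing_def)
    qed
  next
    case (Suc n)
    show ?case
    proof (intro allI impI)
      fix x j assume px: "Pz D wt x" and nx: "\<forall>k\<le>0. x $$ k = 0" and jn: "j \<le> Suc n"
      have "x $$ (int 0 + 1) = 0" using Suc px nx by blast
      then have x1: "x $$ 1 = 0" by simp
      define y where "y = wave_deriv D 0 x"
      have py: "Pz D wt y" unfolding y_def using px by (rule Pz_wave)
      have yn: "y $$ k = D 0 (x $$ k) + x $$ (k + 1)" for k
        by (simp add: y_def wave_deriv_AB Aop_nth[OF dv] Bop_nth)
      have ny: "\<forall>k\<le>0. y $$ k = 0"
      proof (intro allI impI)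
        fix k :: int assume "k \<le> 0"
        then have "x $$ (k + 1) = 0" using nx x1 by (cases "k = 0") auto
        then show "y $$ k = 0" using \<open>k \<le> 0\<close> nx by (simp add: yn derivs_zero[OF dv])
      qed
      show "x $$ (int j + 1) = 0"
      proof (cases "j \<le> n")
        case True then show ?thesis using Suc px nx by blast
      next
        case False
        then have j: "j = Suc n" using jn by simp
        have "y $$ (int n + 1) = 0" using Suc py ny by blast
        moreover have "x $$ (int n + 1) = 0" using Suc px nx by blast
        ultimately show ?thesis using j by (simp add: yn derivs_zero[OF dv] add.commute add.left_commute)
      qed
    qed
  qed
  note H = this
  have "x $$ k = 0" for k
  proof (cases "k \<le> 0")
    case True then show ?thesis using assms(2) by simp
  next
    case False
    then have k: "k = int (nat (k - 1)) + 1" by simp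
    have "\<forall>j\<le>nat (k - 1). x $$ (int j + 1) = 0" using H assms by blast
    then show ?thesis by (subst k) blast
  qed
  then show ?thesis by (intro fls_eqI) simp
qed

end

lemma exp_coeffs: "miwa2_exp_coeffs $ n = cc n"
proof -
  define g :: "real fps" where "g = Abs_fps (\<lambda>n. if odd n then 2 / real n else 0)"
  define h where "h = fps_compose (fps_exp 1) g"
  have h_def': "miwa2_exp_coeffs = h" by (simp add: h_def g_def miwa2_exp_coeffs_def)
  have g0: "g $ 0 = 0" by (simp add: g_def)
  have dh: "fps_deriv h = h * fps_deriv g"
    unfolding h_def using g0 by (simp add: fps_compose_deriv)
  have dg: "(1 - fps_X ^ 2) * fps_deriv g = 2"
  proof (rule fps_ext)
    fix n
    have gn: "fps_deriv g $ k = (if even k then 2 else 0)" for k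
      by (simp add: g_def del: of_nat_Suc)
    have "((1 - fps_X ^ 2) * fps_deriv g) $ n = fps_deriv g $ n - (fps_X ^ 2 * fps_deriv g) $ n"
      by (simp only: left_diff_distrib fps_sub_nth mult_1)
    also have "\<dots> = (2 :: real fps) $ n"
      by (simp only: fps_X_power_mult_nth gn) (cases "n < 2", auto simp: numeral_fps_const)
    finally show "((1 - fps_X ^ 2) * fps_deriv g) $ n = (2 :: real fps) $ n" .
  qed
  have eq: "(1 - fps_X ^ 2) * fps_deriv h = 2 * h"
  proof -
    have "(1 - fps_X ^ 2) * fps_deriv h = h * ((1 - fps_X ^ 2) * fps_deriv g)"
      by (simp only: dh mult.left_commute[of _ h] mult.assoc)
    also have "\<dots> = h * 2" by (simp only: dg)
    finally show ?thesis by (simp add: mult.commute)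
  qed
  have rec: "real (Suc n) * h $ Suc n - (if n < 2 then 0 else real (n - 1) * h $ (n - 1)) = 2 * h $ n" for n
  proof -
    have "((1 - fps_X ^ 2) * fps_deriv h) $ n = (2 * h) $ n" by (simp only: eq)
    moreover have "((1 - fps_X ^ 2) * fps_deriv h) $ n = fps_deriv h $ n - (fps_X ^ 2 * fps_deriv h) $ n"
      by (simp only: left_diff_distrib fps_sub_nth mult_1)
    moreover have "(2 * h) $ n = 2 * h $ n" by (simp add: numeral_fps_const)
    ultimately have "fps_deriv h $ n - (fps_X ^ 2 * fps_deriv h) $ n = 2 * h $ n" by simp
    then show ?thesis
      by (simp only: fps_X_power_mult_nth) (cases "n < 2", auto simp: Suc_diff_Suc numeral_2_eq_2)
  qed
  have "h $ n = cc n"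
  proof (induction n rule: less_induct)
    case (less n)
    show ?case
    proof (cases n)
      case 0 then show ?thesis by (simp add: h_def cc_def)
    next
      case (Suc m)
      show ?thesis
      proof (cases m)
        case 0
        then show ?thesis using rec[of 0] less[of 0] Suc by (simp add: cc_def)
      next
        case (Suc m1)
        have r: "real (Suc m) * h $ Suc m - (if m < 2 then 0 else real (m - 1) * h $ (m - 1)) = 2 * h $ m"
          by (rule rec)
        have hm: "h $ m = 2" using less[of m] Suc \<open>n = Suc m\<close> by (simp add: cc_def)
        show ?thesis
        proof (cases "m < 2")
          case True
          then have "m = 1" using \<open>m = Suc m1\<close> by simp
          then show ?thesis using r hm \<open>n = Suc m\<close> by (simp add: cc_def)
        next
          case False
          have "h $ (m - 1) = 2" using less[of "m - 1"] False \<open>n = Suc m\<close> by (simp add: cc_def)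
          then have "real (Suc m) * h $ Suc m = 2 * real (Suc m)"
            using r hm False by (simp add: of_nat_diff algebra_simps)
          then have "real (Suc m) * (h $ Suc m - 2) = 0" by (simp add: algebra_simps)
          then have "h $ Suc m = 2" by simp
          then show ?thesis using \<open>n = Suc m\<close> by (simp add: cc_def)
        qed
      qed
    qed
  qed
  then show ?thesis by (simp add: h_def')
qed

lemma AB_comm':
  assumes dv: "odd_time_derivations D"
  shows "fls_X_inv ^ b * Aop D k x = Aop D k (fls_X_inv ^ b * x)"
  by (rule fls_eqI) (simp add: Aop_nth[OF dv])

lemma exp_xi_nth: "(exp_xi_miwa2 :: 'r::real_algebra_1 fls fps) $ n = fls_const (of_real (cc n)) * fls_X_inv ^ n"
  by (simp add: exp_xi_miwa2_def exp_coeffs)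

lemma dressing_nth: "dressing w $$ k = (if k < 0 then 0 else (if k = 0 then 1 else w (nat k)))"
  by (simp add: dressing_def)

lemma Zpow_linop: "fv.linop (\<lambda>_ x. fls_X_inv ^ b * (x :: 'r::real_algebra_1 fls))"
  unfolding fv.linop_def by (auto intro!: fls_eqI)

lemma mult_cZ: "x * (fls_const (of_real c) * fls_X_inv ^ b) = flsc c (fls_X_inv ^ b * (x :: 'r::real_algebra_1 fls))"
proof -
  have "x * (fls_const (of_real c) * fls_X_inv ^ b) = (x * fls_const (of_real c)) * fls_X_inv ^ b"
    by (simp add: mult.assoc)
  also have "\<dots> = fls_const (of_real c) * (x * fls_X_inv ^ b)"
    by (simp add: mult.assoc fls_const_central[OF of_real_comm])
  also have "\<dots> = flsc c (fls_X_inv ^ b * x)"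
    by (simp add: flsc_def fls_X_inv_pow_central)
  finally show ?thesis .
qed

lemma wave_miwa2_nth:
  fixes D :: "nat \<Rightarrow> 'r::real_algebra_1 \<Rightarrow> 'r"
  assumes dv: "odd_time_derivations D"
  shows "wave_miwa2 D w $ n = tay flsc (wave_deriv D) n (dressing w)"
proof -
  define Wt :: "'r fls fps" where "Wt = Abs_fps (\<lambda>m. fps_to_fls (Abs_fps (\<lambda>n. miwa2_coeff D m (if n = 0 then 1 else w n))))"
  have Wt_eq: "Wt $ i = tay flsc (Aop D) i (dressing w)" for i
  proof (rule fls_eqI)
    fix k
    show "Wt $ i $$ k = tay flsc (Aop D) i (dressing w) $$ k"
      by (simp add: Wt_def tay_Aop_nth[OF dv] dressing_nth miwa2_coeff_tay rv.tay_zero[OF derivs_linop[OF dv]])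
  qed
  have comm: "x * (fls_const (of_real c) * fls_X_inv ^ b) = flsc c (fls_X_inv ^ b * x)" for x :: "'r fls" and c b
  proof -
    have "x * (fls_const (of_real c) * fls_X_inv ^ b) = (x * fls_const (of_real c)) * fls_X_inv ^ b"
      by (simp add: mult.assoc)
    also have "\<dots> = fls_const (of_real c) * (x * fls_X_inv ^ b)"
      by (simp add: mult.assoc fls_const_central[OF of_real_comm])
    also have "\<dots> = flsc c (fls_X_inv ^ b * x)"
      by (simp add: flsc_def fls_X_inv_pow_central)
    finally show ?thesis .
  qed
  have Zc: "fls_X_inv ^ b * tay flsc (Aop D) a x = tay flsc (Aop D) a (fls_X_inv ^ b * x)" for a b and x :: "'r fls"
    by (rule fv.tay_comm[OF Zpow_linop]) (rule AB_comm'[OF dv])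
  have "wave_miwa2 D w $ n = (\<Sum>i\<le>n. Wt $ i * exp_xi_miwa2 $ (n - i))"
    by (simp add: wave_miwa2_def Wt_def[symmetric] fps_mult_nth atLeast0AtMost)
  also have "\<dots> = (\<Sum>i\<le>n. flsc (cc (n - i)) (fls_X_inv ^ (n - i) * tay flsc (Aop D) i (dressing w)))"
    by (simp add: exp_xi_nth comm Wt_eq)
  also have "\<dots> = (\<Sum>a\<le>n. tay flsc (Aop D) a (tay flsc Bop (n - a) (dressing w)))"
    by (simp add: tay_Bop fv.tay_sc[OF Aop_linop[OF dv]] Zc)
  also have "\<dots> = tay flsc (wave_deriv D) n (dressing w)"
    unfolding wave_deriv_AB
    by (rule fv.tay_binomial[OF Aop_linop[OF dv] Bop_linop AB_comm[OF dv], symmetric])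
  finally show ?thesis .
qed

definition cz :: "int \<Rightarrow> 'r::real_algebra_1 fls fps \<Rightarrow> 'r fps" where
  "cz j Y = Abs_fps (\<lambda>n. Y $ n $$ j)"

lemma cz_nth[simp]: "cz j Y $ n = Y $ n $$ j"
  by (simp add: cz_def)

lemma cz_add: "cz j (A + B) = cz j A + cz j B"
  by (rule fps_ext) simp

lemma cz_diff: "cz j (A - B) = cz j A - cz j B"
  by (rule fps_ext) simp

lemma cz_zero: "cz j 0 = 0"
  by (rule fps_ext) simp

lemma lift_nth: "lift_fps a $ n = fls_const (a $ n)"
  by (simp add: lift_fps_def)

lemma cz_lift: "cz j (lift_fps a * Y) = a * cz j Y"
  by (rule fps_ext) (simp add: fps_mult_nth lift_nth fls_nth_sum)

lemma cz_X: "cz j (fps_X * Y) = fps_X * cz j Y"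
  by (rule fps_ext) simp

lemma cz_Z: "cz j (fps_const fls_X_inv * Y) = cz (j + 1) Y"
  by (rule fps_ext) simp

lemma cz_const: "cz j (fps_const x) = fps_const (x $$ j)"
  by (rule fps_ext) (simp add: fps_const_def)

lemma cz_dl: "odd_time_derivations D \<Longrightarrow> cz j (fps_cmap (fls_cmap (D 0)) Y) = fps_cmap (D 0) (cz j Y)"
  by (rule fps_ext) (simp add: fls_cmap_nth derivs_zero)

lemma Z_comm: "fps_const fls_X_inv * Y = Y * (fps_const fls_X_inv :: 'r::real_algebra_1 fls fps)"
  by (rule fps_ext) (simp add: fls_X_inv_times_comm)

lemma X_comm: "fps_X * Y = Y * (fps_X :: 'a::ring_1 fps)"
  by (rule fps_mult_fps_X_commute)

lemma LZ_comm: "(fps_X * fps_const fls_X_inv) * Y = Y * (fps_X * (fps_const fls_X_inv :: 'r::real_algebra_1 fls fps))"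
proof -
  have "(fps_X * fps_const fls_X_inv) * Y = fps_X * (Y * fps_const fls_X_inv)"
    by (simp only: mult.assoc Z_comm)
  also have "\<dots> = (fps_X * Y) * fps_const fls_X_inv" by (simp only: mult.assoc)
  also have "\<dots> = Y * (fps_X * fps_const fls_X_inv)" by (simp only: X_comm mult.assoc)
  finally show ?thesis .
qed

lemma U_comm: "(1 - fps_X * fps_const fls_X_inv) * Y = Y * (1 - fps_X * (fps_const fls_X_inv :: 'r::real_algebra_1 fls fps))"
proof -
  have "(1 - fps_X * fps_const fls_X_inv) * Y = Y - (fps_X * fps_const fls_X_inv) * Y"
    by (simp only: left_diff_distrib mult_1)
  also have "\<dots> = Y - Y * (fps_X * fps_const fls_X_inv)" by (simp only: LZ_comm)
  also have "\<dots> = Y * (1 - fps_X * (fps_const fls_X_inv :: 'r::real_algebra_1 fls fps))"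
    by (simp only: right_diff_distrib mult_1_right)
  finally show ?thesis .
qed

lemma UE: "(1 - fps_X * fps_const fls_X_inv) * (exp_xi_miwa2 :: 'r::real_algebra_1 fls fps) = 1 + fps_X * fps_const fls_X_inv"
proof (rule fps_ext)
  fix n
  have e: "exp_xi_miwa2 $ n = fls_const (of_real (cc n)) * fls_X_inv ^ n" for n
    by (rule exp_xi_nth)
  show "((1 - fps_X * fps_const fls_X_inv) * exp_xi_miwa2) $ n = (1 + fps_X * fps_const fls_X_inv :: 'r fls fps) $ n"
  proof (cases n)
    case 0 then show ?thesis by (simp add: left_diff_distrib mult.assoc e cc_def)
  next
    case (Suc m)
    have "((1 - fps_X * fps_const fls_X_inv) * exp_xi_miwa2) $ n
        = fls_const (of_real (cc (Suc m))) * fls_X_inv ^ Suc m - fls_X_inv * (fls_const (of_real (cc m)) * fls_X_inv ^ m :: 'r fls)"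
      by (simp add: left_diff_distrib mult.assoc e Suc del: power_Suc)
    also have "\<dots> = fls_const (of_real (cc (Suc m))) * fls_X_inv ^ Suc m - fls_const (of_real (cc m)) * fls_X_inv ^ Suc m"
    proof -
      have "fls_X_inv * (fls_const (of_real (cc m)) * fls_X_inv ^ m) = (fls_X_inv * fls_const (of_real (cc m))) * (fls_X_inv ^ m :: 'r fls)"
        by (simp only: mult.assoc)
      also have "\<dots> = fls_const (of_real (cc m)) * (fls_X_inv * fls_X_inv ^ m)"
        by (simp only: fls_X_inv_times_comm mult.assoc)
      finally show ?thesis by simp
    qed
    also have "\<dots> = (1 + fps_X * fps_const fls_X_inv :: 'r fls fps) $ n"
    proof (cases m)
      case 0 then show ?thesis by (simp add: Suc cc_def) (simp add: mult_2)
    next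
      case (Suc m1) then show ?thesis by (simp add: \<open>n = Suc m\<close> cc_def del: power_Suc)
    qed
    finally show ?thesis .
  qed
qed

lemma dl_E:
  assumes dv: "odd_time_derivations D"
  shows "fps_cmap (fls_cmap (D 0)) (Y * exp_xi_miwa2) = fps_cmap (fls_cmap (D 0)) Y * (exp_xi_miwa2 :: 'r::real_algebra_1 fls fps)"
proof (rule fps_ext)
  fix n
  have "fls_cmap (D 0) (x * (fls_const (of_real c) * fls_X_inv ^ b)) = fls_cmap (D 0) x * (fls_const (of_real c) * fls_X_inv ^ b)"
    for x :: "'r fls" and c b
    unfolding mult_cZ Aop_def[symmetric]
    by (simp add: fv.linop_sc[OF Aop_linop[OF dv]] AB_comm'[OF dv])
  then show "fps_cmap (fls_cmap (D 0)) (Y * exp_xi_miwa2) $ n = (fps_cmap (fls_cmap (D 0)) Y * exp_xi_miwa2) $ n"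
    by (simp add: fps_mult_nth exp_xi_nth Aop_def[symmetric] fv.linop_sum[OF Aop_linop[OF dv]])
qed

lemma wave_t1_split: "wave_t1 D Y = fps_cmap (fls_cmap (D 0)) Y + fps_const fls_X_inv * Y"
  by (rule fps_ext) (simp add: wave_t1_def wave_deriv_def)

lemma Pz_lift:
  assumes dv: "odd_time_derivations D" and "\<And>m. Pz D wt (Y $ m)"
  shows "Pz D wt ((lift_fps a * Y) $ n)"
  unfolding fps_mult_nth lift_nth
  by (intro Pz_sum[OF dv] Pz_const[OF dv] assms(2))

lemma X_cancel: "fps_X * a = fps_X * b \<Longrightarrow> a = (b :: 'a::ring_1 fps)"
proof (rule fps_ext)
  fix n assume "fps_X * a = fps_X * b"
  then have "(fps_X * a) $ Suc n = (fps_X * b) $ Suc n" by simp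
  then show "a $ n = b $ n" by simp
qed

context
  fixes D :: "nat \<Rightarrow> 'r::real_algebra_1 \<Rightarrow> 'r"
  assumes dv: "odd_time_derivations D"
begin

lemma miwa2_nth: "miwa2 D x $ n = tay scaleR D n x"
  by (simp add: miwa2_def miwa2_coeff_tay)

lemma m_add: "miwa2 D (x + y) = miwa2 D x + miwa2 D y"
  by (rule fps_ext) (simp add: miwa2_nth rv.tay_add[OF derivs_linop[OF dv]])

lemma m_zero: "miwa2 D 0 = 0"
  by (rule fps_ext) (simp add: miwa2_nth rv.tay_zero[OF derivs_linop[OF dv]])

lemma m_neg: "miwa2 D (- x) = - miwa2 D x"
  using m_add[of x "- x"] by (simp add: m_zero eq_neg_iff_add_eq_0 add.commute)

lemma m_diff: "miwa2 D (x - y) = miwa2 D x - miwa2 D y"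
  using m_add[of x "- y"] by (simp add: m_neg)

lemma m_ofreal: "miwa2 D (of_real r * x) = fps_const (of_real r) * miwa2 D x"
  by (rule fps_ext) (simp add: miwa2_nth scaleR_conv_of_real[symmetric] rv.tay_sc[OF derivs_linop[OF dv]])

lemma m_D0: "miwa2 D (D 0 x) = fps_cmap (D 0) (miwa2 D x)"
proof (rule fps_ext)
  fix n
  have "D 0 (tay scaleR D n x) = tay scaleR D n (D 0 x)"
    by (rule rv.tay_comm[OF derivs_linop[OF dv]]) (use dv in \<open>simp add: odd_time_derivations_def\<close>)
  then show "miwa2 D (D 0 x) $ n = fps_cmap (D 0) (miwa2 D x) $ n" by (simp add: miwa2_nth)
qed

lemma m_mult: "miwa2 D (x * y) = miwa2 D x * miwa2 D y"
  by (rule fps_ext) (simp add: miwa2_nth fps_mult_nth tay_mult[OF dv] atLeast0AtMost)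

lemma m_one: "miwa2 D 1 = 1"
proof (rule fps_ext)
  fix n
  have "tay scaleR D n 1 = (if n = 0 then 1 else 0)"
    by (cases n) (simp_all add: derivs_one[OF dv] rv.tay_zero[OF derivs_linop[OF dv]])
  then show "miwa2 D 1 $ n = 1 $ n" by (simp add: miwa2_nth)
qed

lemma dl_add: "fps_cmap (D 0) (x + y) = fps_cmap (D 0) x + fps_cmap (D 0) y"
  by (rule fps_ext) (use dv in \<open>simp add: odd_time_derivations_def\<close>)

lemma dl_zero: "fps_cmap (D 0) 0 = 0"
  by (rule fps_ext) (simp add: derivs_zero[OF dv])

lemma dl_neg: "fps_cmap (D 0) (- x) = - fps_cmap (D 0) x"
  using dl_add[of x "- x"] by (simp add: dl_zero eq_neg_iff_add_eq_0 add.commute)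

lemma dl_diff: "fps_cmap (D 0) (x - y) = fps_cmap (D 0) x - fps_cmap (D 0) y"
  using dl_add[of x "- y"] by (simp add: dl_neg)

lemma dl_const: "fps_cmap (D 0) (fps_const x) = fps_const (D 0 x)"
  by (rule fps_ext) (simp add: derivs_zero[OF dv])

lemma dl_one: "fps_cmap (D 0) 1 = 0"
  by (rule fps_ext) (simp add: derivs_zero[OF dv] derivs_one[OF dv])

lemma fdl_add: "fps_cmap (fls_cmap (D 0)) (x + y) = fps_cmap (fls_cmap (D 0)) x + fps_cmap (fls_cmap (D 0)) y"
  by (rule fps_ext, rule fls_eqI) (use dv in \<open>simp add: odd_time_derivations_def fls_cmap_nth derivs_zero[OF dv]\<close>)

end

lemma cz_U: "cz j ((1 - fps_X * fps_const fls_X_inv) * Y) = cz j Y - fps_X * cz (j + 1) Y"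
  by (simp add: left_diff_distrib mult.assoc cz_diff cz_X cz_Z)

lemma cz_U': "cz j (Y * (1 + fps_X * fps_const fls_X_inv)) = cz j Y + fps_X * cz (j + 1) Y"
proof -
  have "Y * (1 + fps_X * fps_const fls_X_inv) = Y + fps_X * (fps_const fls_X_inv * Y)"
    by (simp add: distrib_left LZ_comm[symmetric] mult.assoc)
  then show ?thesis by (simp add: cz_add cz_X cz_Z)
qed

lemma half_double: "fps_const (of_real (1/2)) * x + fps_const (of_real (1/2)) * x = (x :: 'r::real_algebra_1 fps)"
proof -
  have "fps_const (of_real (1/2)) * x + fps_const (of_real (1/2)) * x = (fps_const (of_real (1/2)) + fps_const (of_real (1/2))) * x"
    by (simp only: distrib_right)
  also have "fps_const (of_real (1/2)) + fps_const (of_real (1/2)) = (1 :: 'r fps)"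
  proof -
    have "(of_real (1/2) + of_real (1/2) :: 'r) = 1" by (simp flip: of_real_add)
    then show ?thesis by (simp only: fps_const_add) simp
  qed
  finally show ?thesis by simp
qed

lemma half_comm: "fps_const (of_real c) * x = x * (fps_const (of_real c) :: 'r::real_algebra_1 fps)"
  by (rule fps_ext) (simp add: of_real_comm)

lemma Xc1: "NO_MATCH fps_X a \<Longrightarrow> a * fps_X = fps_X * (a :: 'r::ring_1 fps)"
  by (simp add: fps_mult_fps_X_commute)
lemma Xc2: "NO_MATCH fps_X a \<Longrightarrow> a * (fps_X * b) = fps_X * (a * b :: 'r::ring_1 fps)"
proof -
  have "a * (fps_X * b) = (a * fps_X) * b" by (simp only: mult.assoc)
  then show ?thesis by (simp only: fps_mult_fps_X_commute[symmetric] mult.assoc)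
qed

lemma hc1: "NO_MATCH 2 a \<Longrightarrow> NO_MATCH fps_X a \<Longrightarrow> NO_MATCH (fps_const (of_real (1/2))) a \<Longrightarrow> a * fps_const (of_real (1/2)) = fps_const (of_real (1/2)) * (a :: 'r::real_algebra_1 fps)"
  by (simp add: half_comm)
lemma hc2: "NO_MATCH 2 a \<Longrightarrow> NO_MATCH fps_X a \<Longrightarrow> NO_MATCH (fps_const (of_real (1/2))) a \<Longrightarrow> a * (fps_const (of_real (1/2)) * b) = fps_const (of_real (1/2)) * (a * b :: 'r::real_algebra_1 fps)"
proof -
  have "a * (fps_const (of_real (1/2)) * b) = (a * fps_const (of_real (1/2))) * b" by (simp only: mult.assoc)
  then show ?thesis by (simp only: half_comm[symmetric] mult.assoc)
qed

lemma d1: "x + x = 2 * (x::'r::ring_1 fps)" by (simp add: mult_2)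
lemma d2: "x + (x + y) = 2 * x + (y::'r::ring_1 fps)" by (simp add: mult_2)
lemma m2X: "2 * (fps_X * y) = fps_X * (2 * y :: 'r::ring_1 fps)"
  by (simp add: mult_2 distrib_left)
lemma m2c: "2 * (fps_const (of_real (1/2)) * y) = (y :: 'r::real_algebra_1 fps)"
  using half_double[of y] by (simp add: mult_2)

lemma n1: "NO_MATCH 2 a \<Longrightarrow> NO_MATCH fps_X a \<Longrightarrow> a * 2 = 2 * (a::'r::ring_1 fps)" by (simp add: mult_2 mult_2_right)
lemma n2: "NO_MATCH 2 a \<Longrightarrow> NO_MATCH fps_X a \<Longrightarrow> a * (2 * b) = 2 * (a * b::'r::ring_1 fps)"
  by (simp add: mult_2 mult_2_right distrib_left distrib_right)

lemmas cent = Xc1 Xc2 hc1 hc2 d1 d2 m2c n1 n2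

abbreviation hlf :: "'r::real_algebra_1 fps" where "hlf \<equiv> fps_const (of_real (1/2))"

lemma alg_m1:
  fixes a1 b1 h :: "'r::real_algebra_1 fps"
  shows "(1 - fps_X * hlf * (- a1 - - b1)) * ((0 + fps_X * 1) - (0 - fps_X * 1))
     - fps_X * (((0 + fps_X * 0) + (0 - fps_X * 0)) + ((1 + fps_X * a1) + (1 - fps_X * b1)))
     - fps_X * (h * ((0 + fps_X * 1) + (0 - fps_X * 1))) = 0"
  by (simp add: algebra_simps cent)

lemma alg_m2:
  fixes F h :: "'r::real_algebra_1 fps"
  shows "F * ((0 + fps_X * 0) - (0 - fps_X * 0))
     - fps_X * (((0 + fps_X * 0) + (0 - fps_X * 0)) + ((0 + fps_X * 1) + (0 - fps_X * 1)))
     - fps_X * (h * ((0 + fps_X * 0) + (0 - fps_X * 0))) = 0"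
  by simp

lemma alg_0:
  fixes a1 b1 a2 b2 da1 db1 h :: "'r::real_algebra_1 fps"
  defines "F \<equiv> 1 - fps_X * hlf * (- a1 - - b1)"
  defines "G \<equiv> (- a2 + hlf * (- da1 + (- a1) * (- a1))) - (- b2 + hlf * (- db1 + (- b1) * (- b1)))
              + hlf * (- da1 - - db1) - hlf * ((- b1) * (- a1) - (- a1) * (- b1))"
  assumes hF: "h * F = fps_X * hlf * G"
  shows "F * ((1 + fps_X * a1) - (1 - fps_X * b1))
     - fps_X * (((0 + fps_X * da1) + (0 - fps_X * db1)) + ((a1 + fps_X * a2) + (b1 - fps_X * b2)))
     - fps_X * (h * ((1 + fps_X * a1) + (1 - fps_X * b1))) = 0"
proof -
  have "(1 + fps_X * a1) + (1 - fps_X * b1) = F + F"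
    by (simp add: F_def algebra_simps cent)
  then have "h * ((1 + fps_X * a1) + (1 - fps_X * b1)) = fps_X * hlf * G + fps_X * hlf * G"
    by (simp add: distrib_left hF)
  then have e: "h * ((1 + fps_X * a1) + (1 - fps_X * b1)) = fps_X * G"
    by (simp add: algebra_simps cent)
  show ?thesis
    unfolding e by (simp add: F_def G_def algebra_simps cent)
qed

lemma ring_inverse_fps:
  fixes f :: "'a::ring_1 fps"
  assumes f0: "f $ 0 = 1"
  shows "ring_inverse f * f = 1"
proof -
  define y where "y = fps_left_inverse f 1"
  have l: "y * f = 1" unfolding y_def by (rule fps_left_inverse) (simp add: f0)
  have "y = fps_right_inverse f 1" unfolding y_def
    by (rule fps_left_inverse_eq_fps_right_inverse) (simp_all add: f0)
  then have r: "f * y = 1" using fps_right_inverse[of f 1] f0 by simp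
  have "ring_inverse f = y" unfolding ring_inverse_def
  proof (rule the_equality)
    show "f * y = 1 \<and> y * f = 1" using l r by simp
  next
    fix z assume "f * z = 1 \<and> z * f = 1"
    then have "z = (y * f) * z" and "y * (f * z) = y" using l by simp_all
    then show "z = y" by (simp add: mult.assoc)
  qed
  then show ?thesis using l by simp
qed


theorem theorem3p1:
  fixes D :: "nat \<Rightarrow> 'r::real_algebra_1 \<Rightarrow> 'r"
    and w wt :: "nat \<Rightarrow> 'r"
    and \<phi> \<theta> :: 'r
    and F :: "'r fps"
    and \<Psi> \<Psi>2 :: "'r fls fps"
  assumes derivs: "odd_time_derivations D"
    and bilinear: "\<forall>js :: nat list.
        res_z (fold (wave_deriv D) js (dressing w) * dressing wt) = 0"
  defines "\<phi> \<equiv> - w 1"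
    and "\<theta> \<equiv> - w 2 + of_real (1/2) * (D 0 \<phi> + \<phi> * \<phi>)"
    and "F \<equiv> 1 - fps_X * fps_const (of_real (1/2)) * (miwa2 D \<phi> - fps_const \<phi>)"
    and "\<Psi> \<equiv> fps_const (dressing w)"
    and "\<Psi>2 \<equiv> wave_miwa2 D w"
  shows "fps_shift 1 (lift_fps F * (\<Psi>2 - \<Psi>)) - wave_t1 D (\<Psi>2 + \<Psi>)
       = lift_fps (fps_X * fps_const (of_real (1/2))
                   * (miwa2 D \<theta> - fps_const \<theta>
                      + fps_const (of_real (1/2)) * fps_cmap (D 0) (miwa2 D \<phi> - fps_const \<phi>)
                      - fps_const (of_real (1/2)) * (fps_const \<phi> * miwa2 D \<phi> - miwa2 D \<phi> * fps_const \<phi>))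
                   * ring_inverse F)
         * (\<Psi>2 + \<Psi>)"
proof -
  note dv = derivs
  define h where "h = fps_X * fps_const (of_real (1/2))
                   * (miwa2 D \<theta> - fps_const \<theta>
                      + fps_const (of_real (1/2)) * fps_cmap (D 0) (miwa2 D \<phi> - fps_const \<phi>)
                      - fps_const (of_real (1/2)) * (fps_const \<phi> * miwa2 D \<phi> - miwa2 D \<phi> * fps_const \<phi>))
                   * ring_inverse F"
  define S where "S = \<Psi>2 + \<Psi>"
  define Q where "Q = lift_fps F * (\<Psi>2 - \<Psi>)"
  define \<Phi> where "\<Phi> = fps_shift 1 Q - wave_t1 D S - lift_fps h * S"
  define U :: "'r fls fps" where "U = 1 - fps_X * fps_const fls_X_inv"
  have PzD: "Pz D wt (dressing w)" using bilinear by (simp add: Pz_def)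
  have Pz2: "Pz D wt (\<Psi>2 $ m)" for m
    unfolding \<Psi>2_def wave_miwa2_nth[OF dv] by (rule Pz_tay[OF dv PzD])
  have Pz1: "Pz D wt (\<Psi> $ m)" for m
    by (simp add: \<Psi>_def PzD Pz_zero[OF dv])
  have PzPhi: "Pz D wt (\<Phi> $ n)" for n
  proof -
    have "\<Phi> $ n = (lift_fps F * (\<Psi>2 - \<Psi>)) $ (n + 1) - wave_deriv D 0 (S $ n) - (lift_fps h * S) $ n"
      by (simp add: \<Phi>_def Q_def wave_t1_def)
    moreover have "Pz D wt ((lift_fps F * (\<Psi>2 - \<Psi>)) $ (n + 1))"
      by (rule Pz_lift[OF dv]) (simp add: Pz_diff[OF dv] Pz1 Pz2)
    moreover have "Pz D wt (wave_deriv D 0 (S $ n))"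
      by (rule Pz_wave[OF dv]) (simp add: S_def Pz_add[OF dv] Pz1 Pz2)
    moreover have "Pz D wt ((lift_fps h * S) $ n)"
      by (rule Pz_lift[OF dv]) (simp add: S_def Pz_add[OF dv] Pz1 Pz2)
    ultimately show ?thesis by (simp add: Pz_diff[OF dv])
  qed
  have NEG: "\<And>n j. j \<le> 0 \<Longrightarrow> (U * \<Phi>) $ n $$ j = 0"
  proof -
    define Wt :: "'r fls fps" where "Wt = Abs_fps (\<lambda>m. fps_to_fls (Abs_fps (\<lambda>n. miwa2_coeff D m (if n = 0 then 1 else w n))))"
    have P2E: "\<Psi>2 = Wt * exp_xi_miwa2" by (simp add: \<Psi>2_def wave_miwa2_def Wt_def)
    define dlf :: "'r fls fps \<Rightarrow> 'r fls fps" where "dlf = fps_cmap (fls_cmap (D 0))"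
    define Zc :: "'r fls fps" where "Zc = fps_const fls_X_inv"
    define dl :: "'r fps \<Rightarrow> 'r fps" where "dl = fps_cmap (D 0)"
    have Uc: "U * (A * B) = A * (U * B)" for A B :: "'r fls fps"
    proof -
      have "U * (A * B) = (U * A) * B" by (simp only: mult.assoc)
      also have "U * A = A * U" unfolding U_def by (rule U_comm)
      finally show ?thesis by (simp only: mult.assoc)
    qed
    have Q0: "Q $ 0 = 0"
      by (simp add: Q_def \<Psi>_def \<Psi>2_def wave_miwa2_nth[OF dv] lift_nth)
    have shQ: "fps_X * fps_shift 1 Q = Q"
      by (rule fps_ext) (simp add: Q0)
    have UPsi2: "U * \<Psi>2 = Wt * (1 + fps_X * Zc)"
      by (simp only: P2E Uc) (simp only: U_def Zc_def UE)
    have UdPsi2: "U * dlf \<Psi>2 = dlf Wt * (1 + fps_X * Zc)"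
      by (simp only: P2E dlf_def dl_E[OF dv] Uc) (simp only: U_def Zc_def UE)
    have dS: "dlf (\<Psi>2 + \<Psi>) = dlf \<Psi>2 + dlf \<Psi>"
      by (simp add: dlf_def fdl_add[OF dv])
    have main: "fps_X * (U * \<Phi>) = lift_fps F * (U * \<Psi>2 - U * \<Psi>)
        - fps_X * ((U * dlf \<Psi>2 + U * dlf \<Psi>) + Zc * (U * \<Psi>2 + U * \<Psi>))
        - fps_X * (lift_fps h * (U * \<Psi>2 + U * \<Psi>))"
    proof -
      have "\<Phi> = fps_shift 1 Q - (dlf S + Zc * S) - lift_fps h * S"
        by (simp add: \<Phi>_def wave_t1_split dlf_def Zc_def)
      then have "U * \<Phi> = U * fps_shift 1 Q - (U * dlf S + Zc * (U * S)) - lift_fps h * (U * S)"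
        by (simp only: right_diff_distrib distrib_left Uc)
      moreover have "fps_X * (U * fps_shift 1 Q) = lift_fps F * (U * \<Psi>2 - U * \<Psi>)"
      proof -
        have "fps_X * (U * fps_shift 1 Q) = U * (fps_X * fps_shift 1 Q)"
          using Uc[of fps_X "fps_shift 1 Q"] by simp
        also have "\<dots> = U * Q" by (simp only: shQ)
        also have "\<dots> = lift_fps F * (U * \<Psi>2 - U * \<Psi>)"
          by (simp only: Q_def Uc right_diff_distrib)
        finally show ?thesis .
      qed
      ultimately show ?thesis
        by (simp only: right_diff_distrib distrib_left dS S_def)
    qed
    have czW: "cz k Wt = (if k < 0 then 0 else miwa2 D (if k = 0 then 1 else w (nat k)))" for k
      by (rule fps_ext) (simp add: Wt_def miwa2_def)
    have czP: "cz k \<Psi> = fps_const (dressing w $$ k)" for k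
      by (simp add: \<Psi>_def cz_const)
    have czUP2: "cz k (U * \<Psi>2) = cz k Wt + fps_X * cz (k + 1) Wt" for k
      by (simp only: UPsi2 Zc_def cz_U')
    have czUP: "cz k (U * \<Psi>) = cz k \<Psi> - fps_X * cz (k + 1) \<Psi>" for k
      by (simp only: U_def cz_U)
    have czUdP2: "cz k (U * dlf \<Psi>2) = dl (cz k Wt) + fps_X * dl (cz (k + 1) Wt)" for k
      by (simp only: UdPsi2 Zc_def cz_U') (simp only: dlf_def dl_def cz_dl[OF dv])
    have czUdP: "cz k (U * dlf \<Psi>) = dl (cz k \<Psi>) - fps_X * dl (cz (k + 1) \<Psi>)" for k
      by (simp only: U_def cz_U dlf_def dl_def cz_dl[OF dv])
    have T: "cz j (fps_X * (U * \<Phi>)) =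
        F * ((cz j Wt + fps_X * cz (j + 1) Wt) - (cz j \<Psi> - fps_X * cz (j + 1) \<Psi>))
        - fps_X * (((dl (cz j Wt) + fps_X * dl (cz (j + 1) Wt)) + (dl (cz j \<Psi>) - fps_X * dl (cz (j + 1) \<Psi>)))
             + ((cz (j + 1) Wt + fps_X * cz (j + 1 + 1) Wt) + (cz (j + 1) \<Psi> - fps_X * cz (j + 1 + 1) \<Psi>)))
        - fps_X * (h * ((cz j Wt + fps_X * cz (j + 1) Wt) + (cz j \<Psi> - fps_X * cz (j + 1) \<Psi>)))" for j
      by (simp only: main cz_diff cz_add cz_lift cz_X Zc_def cz_Z czUP2 czUP czUdP2 czUdP)
    define a1 where "a1 = miwa2 D (w 1)"
    define a2 where "a2 = miwa2 D (w 2)"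
    define b1 :: "'r fps" where "b1 = fps_const (w 1)"
    define b2 :: "'r fps" where "b2 = fps_const (w 2)"
    have Fa: "F = 1 - fps_X * hlf * (- a1 - - b1)"
      by (simp add: F_def \<phi>_def a1_def b1_def m_neg[OF dv])
    have F0: "F $ 0 = 1" by (simp add: F_def)
    have FiF: "ring_inverse F * F = 1" by (rule ring_inverse_fps[OF F0])
    have hF: "h * F = fps_X * hlf * ((- a2 + hlf * (- dl a1 + (- a1) * (- a1))) - (- b2 + hlf * (- dl b1 + (- b1) * (- b1)))
              + hlf * (- dl a1 - - dl b1) - hlf * ((- b1) * (- a1) - (- a1) * (- b1)))"
    proof -
      have m\<phi>: "miwa2 D \<phi> = - a1" by (simp add: \<phi>_def a1_def m_neg[OF dv])
      have c\<phi>: "fps_const \<phi> = - b1" by (simp add: \<phi>_def b1_def)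
      have "miwa2 D \<theta> = - a2 + hlf * (- dl a1 + (- a1) * (- a1))"
        by (simp only: \<theta>_def m_add[OF dv] m_neg[OF dv] m_ofreal[OF dv]) (simp only: m_D0[OF dv] m_mult[OF dv] m\<phi> a2_def[symmetric] dl_def dl_neg[OF dv])
      moreover have "fps_const \<theta> = - b2 + hlf * (- dl b1 + (- b1) * (- b1))"
      proof -
        have "D 0 \<phi> = - D 0 (w 1)" unfolding \<phi>_def
          using rv.linop_add[OF derivs_linop[OF dv], of 0 "w 1" "- w 1"] by (simp add: derivs_zero[OF dv] eq_neg_iff_add_eq_0 add.commute)
        then show ?thesis
          by (simp add: \<theta>_def b2_def b1_def dl_def dl_const[OF dv] c\<phi>[symmetric] fps_const_mult[symmetric] del: fps_const_mult fps_const_neg)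
            (simp add: \<phi>_def)
      qed
      moreover have "hlf * dl (miwa2 D \<phi> - fps_const \<phi>) = hlf * (- dl a1 - - dl b1)"
        by (simp add: m\<phi> c\<phi> dl_def dl_diff[OF dv] dl_neg[OF dv])
      ultimately have G: "miwa2 D \<theta> - fps_const \<theta> + hlf * fps_cmap (D 0) (miwa2 D \<phi> - fps_const \<phi>)
                      - hlf * (fps_const \<phi> * miwa2 D \<phi> - miwa2 D \<phi> * fps_const \<phi>)
          = (- a2 + hlf * (- dl a1 + (- a1) * (- a1))) - (- b2 + hlf * (- dl b1 + (- b1) * (- b1)))
              + hlf * (- dl a1 - - dl b1) - hlf * ((- b1) * (- a1) - (- a1) * (- b1))"
        by (simp only: dl_def m\<phi> c\<phi>)
      show ?thesis unfolding h_def G by (simp only: mult.assoc FiF mult_1_right)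
    qed
    have dl1: "dl 1 = 0" by (simp add: dl_def dl_one[OF dv])
    have dl0: "dl 0 = 0" by (simp add: dl_def dl_zero[OF dv])
    have cz0: "cz 0 Wt = 1" "cz 1 Wt = a1" "cz 2 Wt = a2" "cz 0 \<Psi> = 1" "cz 1 \<Psi> = b1" "cz 2 \<Psi> = b2"
      by (simp_all add: czW czP m_one[OF dv] a1_def a2_def b1_def b2_def dressing_nth)
    have czn: "k < 0 \<Longrightarrow> cz k Wt = 0" "k < 0 \<Longrightarrow> cz k \<Psi> = 0" for k
      by (simp_all add: czW czP dressing_nth)
    have Tz: "cz j (fps_X * (U * \<Phi>)) = 0" if j: "j \<le> 0" for j
    proof -
      consider "j = 0" | "j = -1" | "j = -2" | "j \<le> -3" using j by linarith
      then show ?thesis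
      proof cases
        case 1
        have "cz j (fps_X * (U * \<Phi>)) = F * ((1 + fps_X * a1) - (1 - fps_X * b1))
           - fps_X * (((0 + fps_X * dl a1) + (0 - fps_X * dl b1)) + ((a1 + fps_X * a2) + (b1 - fps_X * b2)))
           - fps_X * (h * ((1 + fps_X * a1) + (1 - fps_X * b1)))"
          unfolding T using 1 by (simp only: cz0 dl1 add_0) (simp add: cz0)
        also have "\<dots> = 0" unfolding Fa by (rule alg_0) (use hF Fa in simp)
        finally show ?thesis .
      next
        case 2
        have "cz j (fps_X * (U * \<Phi>)) = F * ((0 + fps_X * 1) - (0 - fps_X * 1))
           - fps_X * (((0 + fps_X * 0) + (0 - fps_X * 0)) + ((1 + fps_X * a1) + (1 - fps_X * b1)))
           - fps_X * (h * ((0 + fps_X * 1) + (0 - fps_X * 1)))"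
          unfolding T using 2 by (simp add: cz0 czn dl1 dl0)
        also have "\<dots> = 0" unfolding Fa by (rule alg_m1)
        finally show ?thesis .
      next
        case 3
        have "cz j (fps_X * (U * \<Phi>)) = F * ((0 + fps_X * 0) - (0 - fps_X * 0))
           - fps_X * (((0 + fps_X * 0) + (0 - fps_X * 0)) + ((0 + fps_X * 1) + (0 - fps_X * 1)))
           - fps_X * (h * ((0 + fps_X * 0) + (0 - fps_X * 0)))"
          unfolding T using 3 by (simp add: cz0 czn dl1 dl0)
        also have "\<dots> = 0" by (rule alg_m2)
        finally show ?thesis .
      next
        case 4
        then show ?thesis unfolding T by (simp add: czn dl0)
      qed
    qed
    show "\<And>n j. j \<le> 0 \<Longrightarrow> (U * \<Phi>) $ n $$ j = 0"
    proof -
      fix n :: nat and j :: int assume "j \<le> 0"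
      then have "fps_X * cz j (U * \<Phi>) = fps_X * 0" using Tz[of j] by (simp add: cz_X)
      then have "cz j (U * \<Phi>) = 0" by (rule X_cancel)
      then have "cz j (U * \<Phi>) $ n = 0" by simp
      then show "(U * \<Phi>) $ n $$ j = 0" by simp
    qed
  qed
  have UPhi: "(U * \<Phi>) $ n = (if n = 0 then \<Phi> $ 0 else \<Phi> $ n - fls_X_inv * \<Phi> $ (n - 1))" for n
    by (simp add: U_def left_diff_distrib mult.assoc)
  have "\<Phi> $ n = 0" for n
  proof (induction n)
    case 0
    show ?case
      by (rule uniqueness[OF dv PzPhi]) (use NEG[of _ 0, unfolded UPhi] in simp)
  next
    case (Suc n)
    show ?case
      by (rule uniqueness[OF dv PzPhi]) (use NEG[of _ "Suc n", unfolded UPhi] Suc in simp)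
  qed
  then have "\<Phi> = 0" by (intro fps_ext) simp
  then show ?thesis by (simp add: \<Phi>_def Q_def S_def h_def)
qed

end
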